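(* There exist universal constants $0<\kappa_1<\kappa_2<\infty$ and $c,C>0$ such that the following holds. Let $\{(a_i,b_i,m_i,n_i):i\in\mathbb{Z}\}$ be a positive ABMN solution with battlefield index $k$. Then there exist $A,F\in[\kappa_1,\kappa_2]$ such that for all $j\ge k$, $a_j=(m_k-m_{k-1})\cdot 2F\cdot 2^{2(j-k)}\exp\{-2\cdot 2^{j-k}A\}(1+\varepsilon^{(1)}_j)$, $b_j=(m_k-m_{k-1})\cdot 4F\cdot 2^{2(j-k)}\exp\{-3\cdot 2^{j-k}A\}(1+\varepsilon^{(2)}_j)$, $m_j-m_{j-1}=(m_k-m_{k-1})\cdot F\cdot 2^{2(j-k)}\exp\{-2^{j-k}A\}(1+\varepsilon^{(3)}_j)$, $n_{j-1}-n_j=(m_k-m_{k-1})\cdot 2F\cdot 2^{2(j-k)}\exp\{-2^{j-k+1}A\}(1+\varepsilon^{(4)}_j)$, where $|\varepsilon^{(r)}_j|\le C\exp\{-c\,2^{j-k}\}$ for $r=1,2,3,4$.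
   Context: ABMN system on $\mathbb{Z}$: real variables $a_i,b_i\ge0$, $m_i,n_i$ with, for all $i\in\mathbb{Z}$, $(a_i+b_i)(m_i+a_i)=a_im_{i+1}+b_im_{i-1}$, $(a_i+b_i)(n_i+b_i)=a_in_{i+1}+b_in_{i-1}$, $(a_i+b_i)^2=b_i(m_{i+1}-m_{i-1})$, $(a_i+b_i)^2=a_i(n_{i-1}-n_{i+1})$. A solution is positive if all $a_i,b_i>0$ (then $m_i$ is strictly increasing and $n_i$ strictly decreasing). For such a solution set $\phi_i=\frac{n_{i-1}-n_i}{m_i-m_{i-1}}$; the battlefield index is the unique $k\in\mathbb{Z}$ with $\phi_k\in(1/3,3]$. "Universal" means independent of the solution. *)

theory Defs
  imports "HOL-Analysis.Analysis"
begin

definition ABMN_solution ::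
  "(int \<Rightarrow> real) \<Rightarrow> (int \<Rightarrow> real) \<Rightarrow> (int \<Rightarrow> real) \<Rightarrow> (int \<Rightarrow> real) \<Rightarrow> bool" where
  "ABMN_solution a b m n \<longleftrightarrow>
     (\<forall>i. a i \<ge> 0 \<and> b i \<ge> 0 \<and>
        (a i + b i) * (m i + a i) = a i * m (i + 1) + b i * m (i - 1) \<and>
        (a i + b i) * (n i + b i) = a i * n (i + 1) + b i * n (i - 1) \<and>
        (a i + b i)^2 = b i * (m (i + 1) - m (i - 1)) \<and>
        (a i + b i)^2 = a i * (n (i - 1) - n (i + 1)))"

definition positive_ABMN_solution ::
  "(int \<Rightarrow> real) \<Rightarrow> (int \<Rightarrow> real) \<Rightarrow> (int \<Rightarrow> real) \<Rightarrow> (int \<Rightarrow> real) \<Rightarrow> bool" where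
  "positive_ABMN_solution a b m n \<longleftrightarrow>
     ABMN_solution a b m n \<and> (\<forall>i. a i > 0 \<and> b i > 0)"

definition ABMN_phi :: "(int \<Rightarrow> real) \<Rightarrow> (int \<Rightarrow> real) \<Rightarrow> int \<Rightarrow> real" where
  "ABMN_phi m n i = (n (i - 1) - n i) / (m i - m (i - 1))"

definition battlefield_index ::
  "(int \<Rightarrow> real) \<Rightarrow> (int \<Rightarrow> real) \<Rightarrow> int \<Rightarrow> bool" where
  "battlefield_index m n k \<longleftrightarrow> ABMN_phi m n k \<in> {1/3<..3}"

end

theory Submission imports Defs begin

lemma expm1_bound:
  fixes x M :: real assumes "\<bar>x\<bar> \<le> M" shows "\<bar>exp x - 1\<bar> \<le> exp M * \<bar>x\<bar>"
proof (cases "x \<ge> 0")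
  case True
  have "1 - x \<le> exp(-x)" using exp_ge_add_one_self[of "-x"] by simp
  hence "exp x * (1 - x) \<le> exp x * exp (-x)" by (simp add: mult_left_mono)
  hence h: "exp x - 1 \<le> x * exp x" by (simp add: exp_minus_inverse algebra_simps)
  have "exp x \<le> exp M" using assms True by simp
  hence "x * exp x \<le> \<bar>x\<bar> * exp M" using True by (simp add: mult_left_mono)
  moreover have "exp x \<ge> 1" using True by simp
  ultimately show ?thesis using h by (simp add: algebra_simps)
next
  case False
  have "1 + x \<le> exp x" by (rule exp_ge_add_one_self)
  moreover have "exp x \<le> 1" using False by simp
  moreover have "exp M \<ge> 1" using assms by simp
  ultimately show ?thesis using False
    by (smt (verit) mult_le_cancel_right1)
qed

lemma tail_lemma:
  fixes X :: "nat \<Rightarrow> real" and K q :: real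
  assumes q0: "0 \<le> q" and q1: "q \<le> 1"
    and d: "\<And>p. \<bar>X (Suc p) - X p\<bar> \<le> K * (1/2)^(2^p) * q^p"
  shows "\<exists>L. (\<forall>p. \<bar>X p - L\<bar> \<le> 2*K*(1/2)^(2^p)*q^p) \<and> ((\<forall>p. X p \<le> X (Suc p)) \<longrightarrow> (\<forall>p. X p \<le> L))"
proof -
  define D where "D i = X (Suc i) - X i" for i
  have K0: "K \<ge> 0"
  proof -
    have "\<bar>X (Suc 0) - X 0\<bar> \<le> K/2" using d[of 0] by simp
    thus ?thesis by linarith
  qed
  have le_geo: "(1/2::real)^(2^i) \<le> (1/2)^i" for i :: nat
    by (rule power_decreasing) (auto intro: less_imp_le less_exp)
  have bD: "\<bar>D i\<bar> \<le> K * (1/2)^i" for i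
  proof -
    have "q^i \<le> 1" using q0 q1 by (simp add: power_le_one)
    hence "K * (1/2)^(2^i) * q^i \<le> K * (1/2)^i * 1"
      using K0 le_geo[of i] q0 by (intro mult_mono) (auto intro: mult_left_mono)
    thus ?thesis using d[of i] unfolding D_def by simp
  qed
  have sg0: "summable (\<lambda>i. K * (1/2::real)^i)"
    by (intro summable_mult summable_geometric) simp
  have sD: "summable D"
    by (rule summable_comparison_test'[OF sg0]) (use bD in simp)
  define L where "L = X 0 + suminf D"
  have Xp: "X p = X 0 + (\<Sum>i<p. D i)" for p
    unfolding D_def by (simp add: sum_lessThan_telescope)
  have LX: "L - X p = (\<Sum>i. D (i + p))" for p
    using suminf_split_initial_segment[OF sD, of p] Xp[of p] unfolding L_def by simp
  have tail: "\<bar>L - X p\<bar> \<le> 2*K*(1/2)^(2^p)*q^p" for p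
  proof -
    define g where "g i = K*(1/2)^(2^p)*q^p*(1/2)^i" for i :: nat
    have sg: "summable g" unfolding g_def by (intro summable_mult summable_geometric) simp
    have sg2: "g sums (2*K*(1/2)^(2^p)*q^p)" unfolding g_def
      using sums_mult[OF geometric_sums[of "1/2::real"], of "K*(1/2)^(2^p)*q^p"] by (simp add: mult_ac)
    have sDp: "summable (\<lambda>i. D (i + p))" using sD by (simp add: summable_iff_shift)
    have bd: "\<bar>D (i+p)\<bar> \<le> g i" for i
    proof -
      have n1: "2^p + i \<le> (2::nat)^(i+p)"
      proof -
        have "i < 2^i" by (rule less_exp)
        hence "(1+i) * 2^p \<le> 2^i * (2::nat)^p" by (intro mult_right_mono) (auto simp: Suc_le_eq)
        moreover have "i * 1 \<le> i * (2::nat)^p" by (intro mult_le_mono2) simp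
        moreover have "(1+i) * (2::nat)^p = 2^p + i * 2^p" by (simp add: algebra_simps)
        moreover have "(2::nat)^(i+p) = 2^i * 2^p" by (simp add: power_add)
        ultimately show ?thesis by linarith
      qed
      have e1: "(1/2::real)^(2^(i+p)) \<le> (1/2)^(2^p) * (1/2)^i"
        using power_decreasing[OF n1, of "1/2::real"] by (simp add: power_add)
      have e2: "q^(i+p) \<le> q^p"
        using q0 q1 by (intro power_decreasing) auto
      have "K * (1/2)^(2^(i+p)) * q^(i+p) \<le> K * ((1/2)^(2^p) * (1/2)^i) * q^p"
        using e1 e2 K0 q0 by (intro mult_mono mult_left_mono) auto
      thus ?thesis using d[of "i+p"] unfolding D_def g_def by (simp add: algebra_simps)
    qed
    have "(\<Sum>i. D (i + p)) \<le> suminf g"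
      by (rule suminf_le) (use bd sDp sg in \<open>auto simp: abs_le_iff\<close>)
    moreover have "- suminf g \<le> (\<Sum>i. D (i + p))"
    proof -
      have "(\<Sum>i. - g i) \<le> (\<Sum>i. D (i + p))"
        by (rule suminf_le) (use bd sDp sg in \<open>auto simp: abs_le_iff summable_minus intro: summable_minus\<close>, smt (verit) bd abs_le_iff)
      thus ?thesis using suminf_minus[OF sg] by simp
    qed
    ultimately show ?thesis using LX[of p] sums_unique[OF sg2] by auto
  qed
  show ?thesis
  proof (intro exI conjI allI impI)
    fix p show "\<bar>X p - L\<bar> \<le> 2*K*(1/2)^(2^p)*q^p" using tail[of p] by (simp add: abs_minus_commute)
  next
    fix p assume mono: "\<forall>p. X p \<le> X (Suc p)"
    have sDp: "summable (\<lambda>i. D (i + p))" using sD by (simp add: summable_iff_shift)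
    have "0 \<le> (\<Sum>i. D (i + p))"
      by (rule suminf_nonneg[OF sDp]) (use mono in \<open>simp add: D_def\<close>)
    thus "X p \<le> L" using LX[of p] by simp
  qed
qed

lemma abmn_facts:
  assumes "positive_ABMN_solution a b m n"
  shows "a i > 0" "b i > 0" "m (i+1) - m i = 2*a i + b i" "m i - m (i-1) = (a i)^2 / b i"
        "n (i-1) - n i = 2*b i + a i" "n i - n (i+1) = (b i)^2 / a i"
proof -
  from assms have ap: "a i > 0" and bp: "b i > 0"
    and e1: "(a i + b i) * (m i + a i) = a i * m (i + 1) + b i * m (i - 1)"
    and e2: "(a i + b i) * (n i + b i) = a i * n (i + 1) + b i * n (i - 1)"
    and e3: "(a i + b i)^2 = b i * (m (i + 1) - m (i - 1))"
    and e4: "(a i + b i)^2 = a i * (n (i - 1) - n (i + 1))"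
    unfolding positive_ABMN_solution_def ABMN_solution_def by blast+
  show "a i > 0" "b i > 0" by (fact ap, fact bp)
  define u where "u = m (i+1) - m i"
  define v where "v = m i - m (i-1)"
  have E1: "a i * u - b i * v - a i * (a i + b i) = (a i * m (i + 1) + b i * m (i - 1)) - (a i + b i) * (m i + a i)"
    unfolding u_def v_def by (simp add: algebra_simps)
  have E3: "b i * u + b i * v = (a i + b i)^2" using e3 unfolding u_def v_def by (simp add: algebra_simps)
  have "(a i + b i) * u = a i * u + b i * u" by (simp add: algebra_simps)
  hence "(a i + b i) * u = (a i + b i) * (2 * a i + b i)"
    using E1 E3 e1 by (simp add: algebra_simps power2_eq_square)
  hence U: "u = 2 * a i + b i" using ap bp by simp
  show "m (i+1) - m i = 2*a i + b i" using U u_def by simp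
  have "b i * v = (a i)^2" using E3 U by (simp add: algebra_simps power2_eq_square)
  thus "m i - m (i-1) = (a i)^2 / b i" using bp unfolding v_def by (simp add: field_simps)
  define x where "x = n i - n (i+1)"
  define y where "y = n (i-1) - n i"
  have G2: "b i * y - a i * x - b i * (a i + b i) = (a i * n (i + 1) + b i * n (i - 1)) - (a i + b i) * (n i + b i)"
    unfolding x_def y_def by (simp add: algebra_simps)
  have G4: "a i * x + a i * y = (a i + b i)^2" using e4 unfolding x_def y_def by (simp add: algebra_simps)
  have "(a i + b i) * y = a i * y + b i * y" by (simp add: algebra_simps)
  hence "(a i + b i) * y = (a i + b i) * (2 * b i + a i)"
    using G2 G4 e2 by (simp add: algebra_simps power2_eq_square)
  hence Y: "y = 2 * b i + a i" using ap bp by simp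
  show "n (i-1) - n i = 2*b i + a i" using Y y_def by simp
  have "a i * x = (b i)^2" using G4 Y by (simp add: algebra_simps power2_eq_square)
  thus "n i - n (i+1) = (b i)^2 / a i" using ap unfolding x_def by (simp add: field_simps)
qed

lemma main_sol:
  assumes sol: "positive_ABMN_solution a b m n" and bf: "battlefield_index m n k"
  shows "\<exists>A F. A \<in> {exp (-4) / 10..exp 25} \<and> F \<in> {exp (-4) / 10..exp 25} \<and>
          (\<forall>j\<ge>k. let D = m k - m (k - 1); t = (2::real) ^ nat (j - k);
                       bd = (20 * exp 6) * exp (- ln 2 * t) in
             (\<exists>\<epsilon>. \<bar>\<epsilon>\<bar> \<le> bd \<and> a j = D * (2 * F) * t^2 * exp (- 2 * t * A) * (1 + \<epsilon>)) \<and>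
             (\<exists>\<epsilon>. \<bar>\<epsilon>\<bar> \<le> bd \<and> b j = D * (4 * F) * t^2 * exp (- 3 * t * A) * (1 + \<epsilon>)) \<and>
             (\<exists>\<epsilon>. \<bar>\<epsilon>\<bar> \<le> bd \<and> m j - m (j - 1) = D * F * t^2 * exp (- t * A) * (1 + \<epsilon>)) \<and>
             (\<exists>\<epsilon>. \<bar>\<epsilon>\<bar> \<le> bd \<and> n (j - 1) - n j = D * (2 * F) * t^2 * exp (- 2 * t * A) * (1 + \<epsilon>)))"
proof -
  note F = abmn_facts[OF sol]
  define \<alpha> where "\<alpha> p = a (k + int p)" for p
  define \<beta> where "\<beta> p = b (k + int p)" for p
  define r where "r p = \<beta> p / \<alpha> p" for p
  define u where "u p = (1/2::real)^(2^p)" for p :: nat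
  have \<alpha>p: "\<alpha> p > 0" for p using F(1) unfolding \<alpha>_def by simp
  have \<beta>p: "\<beta> p > 0" for p using F(2) unfolding \<beta>_def by simp
  have rp: "r p > 0" for p unfolding r_def using \<alpha>p \<beta>p by simp
  have up: "u p > 0" for p unfolding u_def by simp
  have uhalf: "u p \<le> 1/2" for p
  proof -
    have "(1/2::real)^(2^p) \<le> (1/2)^1" by (rule power_decreasing) auto
    thus ?thesis unfolding u_def by simp
  qed
  have umono: "u (Suc p) \<le> u p" for p
    unfolding u_def by (rule power_decreasing) auto
  have usq: "u (Suc p) = (u p)^2" for p
    unfolding u_def by (simp add: power_mult[symmetric] mult.commute)
  have idx: "k + int (Suc p) = k + int p + 1" for p by simp
  have rel1: "(\<alpha> (Suc p))^2 = \<beta> (Suc p) * (2*\<alpha> p + \<beta> p)" for p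
  proof -
    have "m (k + int p + 1) - m (k + int p) = 2 * a (k+int p) + b (k+int p)" by (rule F(3))
    moreover have "m (k + int p + 1) - m (k + int p + 1 - 1) = (a (k+int p+1))^2 / b (k+int p+1)" by (rule F(4))
    ultimately have "(\<alpha> (Suc p))^2 / \<beta> (Suc p) = 2*\<alpha> p + \<beta> p" unfolding \<alpha>_def \<beta>_def idx by simp
    thus ?thesis using \<beta>p[of "Suc p"] by (simp add: field_simps)
  qed
  have rel2: "\<alpha> (Suc p) + 2*\<beta> (Suc p) = (\<beta> p)^2/\<alpha> p" for p
  proof -
    have "n (k + int p) - n (k + int p + 1) = (b (k+int p))^2 / a (k+int p)" by (rule F(6))
    moreover have "n (k + int p + 1 - 1) - n (k + int p + 1) = 2 * b (k+int p+1) + a (k+int p+1)" by (rule F(5))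
    ultimately show ?thesis unfolding \<alpha>_def \<beta>_def idx by simp
  qed
  have rec_a: "\<alpha> (Suc p) = \<alpha> p * (2 + r p) * r (Suc p)" for p
  proof -
    have "\<alpha> (Suc p) = (\<alpha> (Suc p))^2 / \<alpha> (Suc p)" using \<alpha>p[of "Suc p"] by (simp add: power2_eq_square)
    also have "\<dots> = r (Suc p) * (2*\<alpha> p + \<beta> p)" unfolding rel1 r_def by simp
    also have "\<dots> = \<alpha> p * (2 + r p) * r (Suc p)" unfolding r_def using \<alpha>p[of p] \<alpha>p[of "Suc p"] by (simp add: field_simps)
    finally show ?thesis .
  qed
  have rec_r: "r (Suc p) * (1 + 2*r (Suc p)) * (2 + r p) = (r p)^2" for p
  proof -
    have "r (Suc p) * (1 + 2*r (Suc p)) = \<beta> (Suc p) * (\<alpha> (Suc p) + 2*\<beta> (Suc p)) / (\<alpha> (Suc p))^2"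
      unfolding r_def using \<alpha>p[of "Suc p"] by (simp add: field_simps power2_eq_square)
    also have "\<dots> = \<beta> (Suc p) * ((\<beta> p)^2/\<alpha> p) / (\<beta> (Suc p) * (2*\<alpha> p + \<beta> p))"
      unfolding rel1 rel2 ..
    also have "\<dots> = (\<beta> p)^2 / (\<alpha> p * (2*\<alpha> p + \<beta> p))"
    proof -
      define c where "c = 2*\<alpha> p + \<beta> p"
      have "c > 0" unfolding c_def using \<alpha>p[of p] \<beta>p[of p] by simp
      thus ?thesis unfolding c_def[symmetric] using \<alpha>p[of p] \<beta>p[of "Suc p"] by (simp add: field_simps)
    qed
    finally have "r (Suc p) * (1 + 2*r (Suc p)) = (\<beta> p)^2 / (\<alpha> p * (2*\<alpha> p + \<beta> p))" .
    moreover have "(\<beta> p)^2 / (\<alpha> p * (2*\<alpha> p + \<beta> p)) * (2 + r p) = (r p)^2"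
    proof -
      have e: "2 + r p = (2*\<alpha> p + \<beta> p) / \<alpha> p" unfolding r_def using \<alpha>p[of p] by (simp add: field_simps)
      have "2*\<alpha> p + \<beta> p > 0" using \<alpha>p[of p] \<beta>p[of p] by simp
      thus ?thesis unfolding e unfolding r_def using \<alpha>p[of p]
        by (simp add: power2_eq_square)
    qed
    ultimately show ?thesis by simp
  qed
  have phi: "ABMN_phi m n k = r 0 * (2 * r 0 + 1)"
  proof -
    have "ABMN_phi m n k = (2*b k + a k)/((a k)^2/b k)"
      using F(5)[of k] F(4)[of k] unfolding ABMN_phi_def by simp
    also have "\<dots> = r 0 * (2 * r 0 + 1)" unfolding r_def \<alpha>_def \<beta>_def
      using F(1)[of k] F(2)[of k] by (simp add: field_simps power2_eq_square)
    finally show ?thesis .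
  qed
  have phib: "1/3 < r 0 * (2 * r 0 + 1)" "r 0 * (2 * r 0 + 1) \<le> 3"
    using bf phi unfolding battlefield_index_def by auto
  have r0le: "r 0 \<le> 1"
  proof (rule ccontr)
    assume "\<not> r 0 \<le> 1"
    hence "1 * 3 < r 0 * (2 * r 0 + 1)" by (intro mult_strict_mono) auto
    thus False using phib by simp
  qed
  have r0ge: "r 0 > 1/5"
  proof (rule ccontr)
    assume "\<not> r 0 > 1/5"
    hence "r 0 * (2 * r 0 + 1) \<le> (1/5) * (7/5)" using rp[of 0] by (intro mult_mono) auto
    thus False using phib by simp
  qed
  have rdec: "r (Suc p) \<le> (r p)^2/2" for p
  proof -
    have "r (Suc p) \<le> r (Suc p) * (1 + 2*r (Suc p))" using rp[of "Suc p"] by (simp add: algebra_simps)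
    also have "\<dots> = (r p)^2 / (2 + r p)" using rec_r[of p] rp[of p] by (simp add: field_simps)
    also have "\<dots> \<le> (r p)^2 / 2" using rp[of p] by (intro divide_left_mono) auto
    finally show ?thesis .
  qed
  have rb: "r p \<le> 2 * u p" for p
  proof (induction p)
    case 0 thus ?case using r0le unfolding u_def by simp
  next
    case (Suc p)
    have "(r p)^2 \<le> (2 * u p)^2" using Suc rp[of p] by (intro power_mono) auto
    hence "(r p)^2/2 \<le> 2 * u (Suc p)" unfolding usq by (simp add: power2_eq_square)
    thus ?case using rdec[of p] by simp
  qed
  have r1: "r p \<le> 1" for p using rb[of p] uhalf[of p] by simp
  define w where "w p = ln (2 / r p)" for p
  define h where "h p = ln (1 + r p/2) + ln (1 + 2*r (Suc p))" for p
  have wrec: "w (Suc p) = 2 * w p + h p" for p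
  proof -
    define R where "R = r p"
    define S where "S = r (Suc p)"
    have R0: "R > 0" and S0: "S > 0" using rp unfolding R_def S_def by auto
    have hR2: "R^2 = S*(1+2*S)*(2+R)" using rec_r[of p] unfolding R_def S_def by simp
    have "(2/R)^2 = 4/(S*(1+2*S)*(2+R))" by (simp add: power_divide hR2[symmetric])
    moreover have "(1 + R/2) * (1 + 2*S) = (S*(1+2*S)*(2+R)) / (2*S)" using S0 by (simp add: field_simps)
    moreover have "S*(1+2*S)*(2+R) > 0" using R0 S0 by simp
    moreover have "2 + R > 0" using R0 by simp
    ultimately have "(2/R)^2 * ((1 + R/2) * (1 + 2*S)) = 2 / S" using S0 by (simp add: field_simps)
    hence "ln (2/S) = ln ((2/R)^2 * ((1 + R/2) * (1 + 2*S)))" by simp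
    also have "\<dots> = 2 * ln (2/R) + (ln (1 + R/2) + ln (1 + 2*S))"
      using R0 S0 by (simp add: ln_mult_pos ln_realpow)
    finally show ?thesis unfolding w_def h_def R_def S_def by simp
  qed
  have h0: "h p \<ge> 0" for p unfolding h_def using rp[of p] rp[of "Suc p"] by simp
  have hb: "h p \<le> 3 * u p" for p
  proof -
    have "h p \<le> r p/2 + 2 * r (Suc p)" unfolding h_def using rp[of p] rp[of "Suc p"]
      by (intro add_mono ln_add_one_self_le_self) auto
    also have "\<dots> \<le> r p/2 + (r p)^2" using rdec[of p] by simp
    also have "\<dots> \<le> r p/2 + r p" using r1[of p] rp[of p] by (simp add: power2_eq_square mult_left_le)
    also have "\<dots> \<le> 3 * u p" using rb[of p] by simp
    finally show ?thesis .
  qed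
  have wdiff: "w (Suc p) / 2^(Suc p) - w p / 2^p = h p / 2^(Suc p)" for p
    unfolding wrec by (simp add: field_simps)
  have "\<exists>L. (\<forall>p. \<bar>w p / 2^p - L\<bar> \<le> 2*(3/2)*(1/2)^(2^p)*(1/2)^p) \<and>
           ((\<forall>p. w p / 2^p \<le> w (Suc p) / 2^(Suc p)) \<longrightarrow> (\<forall>p. w p / 2^p \<le> L))"
  proof (rule tail_lemma)
    fix p
    have "\<bar>w (Suc p) / 2^(Suc p) - w p / 2^p\<bar> = h p / 2^(Suc p)" using wdiff[of p] h0[of p] by simp
    also have "\<dots> \<le> 3 * u p / 2^(Suc p)" using hb[of p] by (simp add: divide_right_mono)
    also have "\<dots> = 3/2 * (1/2)^(2^p) * (1/2)^p" unfolding u_def by (simp add: power_divide)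
    finally show "\<bar>w (Suc p) / 2^(Suc p) - w p / 2^p\<bar> \<le> 3/2 * (1/2)^(2^p) * (1/2)^p" .
  qed auto
  moreover have "\<forall>p. w p / 2^p \<le> w (Suc p) / 2^(Suc p)" using wdiff h0 by (simp add: algebra_simps)
  ultimately obtain A where A1': "\<forall>p. \<bar>w p / 2^p - A\<bar> \<le> 2*(3/2)*(1/2)^(2^p)*(1/2)^p"
    and A2': "\<forall>p. w p / 2^p \<le> A" by blast
  have A1: "\<bar>w p / 2^p - A\<bar> \<le> 3*(1/2)^(2^p)*(1/2)^p" for p using A1' by simp
  have A2: "w p / 2^p \<le> A" for p using A2' by simp
  define \<eta> where "\<eta> p = 2^p * A - w p" for p
  have \<eta>0: "\<eta> p \<ge> 0" for p
  proof -
    have "w p \<le> 2^p * A" using A2[of p] by (simp add: field_simps)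
    thus ?thesis unfolding \<eta>_def by simp
  qed
  have \<eta>b: "\<eta> p \<le> 3 * u p" for p
  proof -
    have "\<bar>w p / 2^p - A\<bar> * 2^p \<le> 3*(1/2)^(2^p)*(1/2)^p * 2^p"
      using A1[of p] by (intro mult_right_mono) auto
    moreover have "\<bar>w p / 2^p - A\<bar> * 2^p = \<bar>w p - (2^p * A)\<bar>"
      by (simp add: abs_mult[symmetric] field_simps)
    moreover have "(1/2::real)^p * 2^p = 1" by (simp add: power_mult_distrib[symmetric])
    moreover have "3*(1/2::real)^(2^p)*(1/2)^p * 2^p = 3*(1/2::real)^(2^p)*((1/2)^p * 2^p)" by (simp only: mult.assoc)
    ultimately have "\<bar>w p - (2^p * A)\<bar> \<le> 3*(1/2::real)^(2^p)" by simp
    thus ?thesis unfolding \<eta>_def u_def by simp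
  qed
  have ln2: "ln (2::real) \<ge> 1/2"
  proof -
    have "ln (1/2::real) \<le> 1/2 - 1" by (rule ln_le_minus_one) simp
    thus ?thesis by (simp add: ln_div)
  qed
  have Alow: "A \<ge> ln 2"
  proof -
    have "2 \<le> 2 / r 0" using r0le rp[of 0] by (simp add: field_simps)
    hence "ln 2 \<le> w 0" unfolding w_def by (rule ln_mono) simp
    thus ?thesis using A2[of 0] by simp
  qed
  have Aup: "A \<le> 21/2"
  proof -
    have "w 0 \<le> 2 / r 0 - 1" unfolding w_def by (rule ln_le_minus_one) (use rp[of 0] in simp)
    moreover have "2 / r 0 \<le> 10" using r0ge by (simp add: field_simps)
    moreover have "\<bar>w 0 - A\<bar> \<le> 3/2" using A1[of 0] by simp
    ultimately show ?thesis by linarith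
  qed
  define Y where "Y p = ln (\<alpha> p) - 2*real p*ln 2 + 2*2^p*A" for p
  have Ydiff: "Y (Suc p) - Y p = ln (1 + r p/2) + \<eta> (Suc p)" for p
  proof -
    have "ln (\<alpha> (Suc p)) = ln (\<alpha> p) + ln 2 + ln (1 + r p/2) + ln (r (Suc p))"
    proof -
      have "\<alpha> (Suc p) = \<alpha> p * 2 * (1 + r p/2) * r (Suc p)" unfolding rec_a by (simp add: algebra_simps)
      thus ?thesis using \<alpha>p[of p] rp[of p] rp[of "Suc p"] by (simp add: ln_mult_pos)
    qed
    moreover have "ln (r (Suc p)) = ln 2 - w (Suc p)" unfolding w_def using rp[of "Suc p"] by (simp add: ln_div)
    ultimately show ?thesis unfolding Y_def \<eta>_def by (simp add: algebra_simps)
  qed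
  have "\<exists>L. (\<forall>p. \<bar>Y p - L\<bar> \<le> 2*4*(1/2)^(2^p)*1^p) \<and> ((\<forall>p. Y p \<le> Y (Suc p)) \<longrightarrow> (\<forall>p. Y p \<le> L))"
  proof (rule tail_lemma)
    fix p
    have "\<bar>Y (Suc p) - Y p\<bar> \<le> r p/2 + 3 * u (Suc p)"
      unfolding Ydiff using \<eta>0[of "Suc p"] \<eta>b[of "Suc p"] rp[of p] ln_add_one_self_le_self[of "r p/2"]
      by simp
    also have "\<dots> \<le> 4 * u p" using rb[of p] umono[of p] by simp
    finally show "\<bar>Y (Suc p) - Y p\<bar> \<le> 4 * (1/2)^(2^p) * 1^p" unfolding u_def by simp
  qed auto
  then obtain La where La': "\<forall>p. \<bar>Y p - La\<bar> \<le> 2*4*(1/2)^(2^p)*1^p" by blast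
  have La: "\<bar>Y p - La\<bar> \<le> 8 * u p" for p using La' unfolding u_def by simp
  define \<theta> where "\<theta> p = Y p - La" for p
  have \<theta>b: "\<bar>\<theta> p\<bar> \<le> 8 * u p" for p using La[of p] unfolding \<theta>_def .
  have \<alpha>form: "\<alpha> p = exp La * (2^p)^2 * exp (- 2 * 2^p * A) * exp (\<theta> p)" for p
  proof -
    have "ln (\<alpha> p) = La + real (2*p) * ln 2 + (- 2 * 2^p * A) + \<theta> p"
      unfolding \<theta>_def Y_def by simp
    hence "\<alpha> p = exp (La + real (2*p) * ln 2 + (- 2 * 2^p * A) + \<theta> p)"
      using \<alpha>p[of p] by (metis exp_ln)
    also have "\<dots> = exp La * exp (real (2*p) * ln 2) * exp (- 2 * 2^p * A) * exp (\<theta> p)"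
      by (simp only: exp_add)
    also have "exp (real (2*p) * ln 2) = (2^p)^2"
    proof -
      have "exp (real (2*p) * ln 2) = exp (ln 2) ^ (2*p)" by (rule exp_of_nat_mult)
      also have "\<dots> = (2::real)^(p*2)" by (simp add: mult.commute)
      also have "\<dots> = (2^p)^2" by (rule power_mult)
      finally show ?thesis .
    qed
    finally show ?thesis .
  qed
  have rform: "r p = 2 * exp (- (2^p * A)) * exp (\<eta> p)" for p
  proof -
    have "exp (w p) = 2 / r p" unfolding w_def using rp[of p] by simp
    hence "r p = 2 / exp (w p)" using rp[of p] by (simp add: field_simps)
    also have "\<dots> = 2 * exp (- (2^p * A) + \<eta> p)" unfolding \<eta>_def by (simp add: exp_minus field_simps)
    also have "\<dots> = 2 * (exp (- (2^p * A)) * exp (\<eta> p))" by (simp only: exp_add)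
    finally show ?thesis by simp
  qed
  define D where "D = m k - m (k - 1)"
  have Dv: "D = \<alpha> 0 / r 0"
    using F(4)[of k] F(1)[of k] F(2)[of k] unfolding D_def r_def \<alpha>_def \<beta>_def
    by (simp add: field_simps power2_eq_square)
  define Fc where "Fc = exp La * r 0 / (2 * \<alpha> 0)"
  have D2F: "D * (2 * Fc) = exp La" unfolding Dv Fc_def using \<alpha>p[of 0] rp[of 0] by (simp add: field_simps)
  have Fc_eq: "Fc = (r 0 / 2) * exp (La - ln (\<alpha> 0))"
    unfolding Fc_def using \<alpha>p[of 0] by (simp add: exp_diff)
  have La0: "\<bar>ln (\<alpha> 0) + 2 * A - La\<bar> \<le> 4" using La[of 0] unfolding Y_def u_def by simp
  have Flow: "Fc \<ge> exp (-4) / 10"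
  proof -
    have "exp (-4) \<le> exp (La - ln (\<alpha> 0))" using La0 Alow ln2 by simp
    moreover have "1/10 \<le> r 0 / 2" using r0ge by simp
    ultimately have "(1/10) * exp (-4) \<le> (r 0 / 2) * exp (La - ln (\<alpha> 0))"
      by (intro mult_mono) auto
    thus ?thesis unfolding Fc_eq by simp
  qed
  have Fup: "Fc \<le> exp 25"
  proof -
    have "exp (La - ln (\<alpha> 0)) \<le> exp 25" using La0 Aup by simp
    moreover have "r 0 / 2 \<le> 1" using r0le by simp
    ultimately have "(r 0 / 2) * exp (La - ln (\<alpha> 0)) \<le> 1 * exp 25"
      using rp[of 0] by (intro mult_mono) auto
    thus ?thesis unfolding Fc_eq by simp
  qed
  have e4le: "exp (-4) / 10 \<le> ln (2::real)"
  proof -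
    have "exp (-4::real) \<le> 1" by simp
    thus ?thesis using ln2 by linarith
  qed
  have Aup2: "A \<le> exp 25"
  proof -
    have "1 + 25 \<le> exp (25::real)" by (rule exp_ge_add_one_self)
    thus ?thesis using Aup by simp
  qed
  show ?thesis
  proof (intro exI conjI allI impI)
    show "A \<in> {exp (-4) / 10..exp 25}" using Alow e4le Aup2 by simp
    show "Fc \<in> {exp (-4) / 10..exp 25}" using Flow Fup by simp
  next
    fix j assume jk: "k \<le> j"
    define p where "p = nat (j - k)"
    have jp: "j = k + int p" unfolding p_def using jk by simp
    define t where "t = (2::real)^p"
    have bdu: "(20 * exp 6) * exp (- ln 2 * (2::real) ^ nat (j - k)) = 20 * exp 6 * u p"
    proof -
      have "exp (- ln 2 * (2::real) ^ nat (j - k)) = exp (real (2^p) * (- ln 2))"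
        unfolding p_def by (simp add: mult.commute)
      also have "\<dots> = (1/2)^(2^p)" unfolding exp_of_nat_mult by (simp add: exp_minus)
      finally show ?thesis unfolding u_def by simp
    qed
    have tt: "(2::real) ^ nat (j - k) = t" unfolding t_def p_def ..
    have aj: "a j = \<alpha> p" unfolding \<alpha>_def jp ..
    have bj: "b j = \<alpha> p * r p" unfolding r_def \<beta>_def jp using \<alpha>p[of p] by (simp add: \<alpha>_def)
    have mj: "m j - m (j - 1) = \<alpha> p / r p"
      using F(4)[of j] unfolding aj bj using \<alpha>p[of p] rp[of p] by (simp add: field_simps power2_eq_square)
    have nj: "n (j - 1) - n j = \<alpha> p * (1 + 2 * r p)"
      using F(5)[of j] unfolding aj bj by (simp add: algebra_simps)
    have \<alpha>t: "\<alpha> p = D * (2 * Fc) * t^2 * exp (- 2 * t * A) * exp (\<theta> p)"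
      unfolding D2F \<alpha>form t_def by simp
    have rt: "r p = 2 * exp (- t * A) * exp (\<eta> p)" unfolding rform t_def by simp
    define C where "C = 20 * exp (6::real)"
    have u1: "u p \<le> 1/2" by (rule uhalf)
    have B1: "\<bar>exp x - 1\<bar> \<le> exp 6 * (11 * u p)" if "\<bar>x\<bar> \<le> 11 * u p" for x
    proof -
      have "\<bar>exp x - 1\<bar> \<le> exp 6 * \<bar>x\<bar>" using that u1 by (intro expm1_bound) simp
      also have "\<dots> \<le> exp 6 * (11 * u p)" using that by (intro mult_left_mono) auto
      finally show ?thesis .
    qed
    have C11: "exp 6 * (11 * u p) \<le> C * u p" unfolding C_def using up[of p] by simp
    have th11: "\<bar>\<theta> p\<bar> \<le> 11 * u p" using \<theta>b[of p] up[of p] by simp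
    have thp: "\<bar>\<theta> p + \<eta> p\<bar> \<le> 11 * u p" using \<theta>b[of p] \<eta>0[of p] \<eta>b[of p] by simp
    have thmi: "\<bar>\<theta> p - \<eta> p\<bar> \<le> 11 * u p" using \<theta>b[of p] \<eta>0[of p] \<eta>b[of p] by simp
    have E1: "\<bar>exp (\<theta> p) - 1\<bar> \<le> C * u p" using B1[OF th11] C11 by simp
    have E2: "\<bar>exp (\<theta> p + \<eta> p) - 1\<bar> \<le> C * u p" using B1[OF thp] C11 by simp
    have E3: "\<bar>exp (\<theta> p - \<eta> p) - 1\<bar> \<le> C * u p" using B1[OF thmi] C11 by simp
    have E4: "\<bar>exp (\<theta> p) * (1 + 2 * r p) - 1\<bar> \<le> C * u p"
    proof -
      have et: "exp (\<theta> p) \<le> exp 6" using \<theta>b[of p] u1 by simp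
      have eq: "exp (\<theta> p) * (1 + 2 * r p) - 1 = (exp (\<theta> p) - 1) + 2 * r p * exp (\<theta> p)"
        by (simp add: algebra_simps)
      have nn: "\<bar>2 * r p * exp (\<theta> p)\<bar> = 2 * r p * exp (\<theta> p)" using rp[of p] by simp
      have "\<bar>exp (\<theta> p) * (1 + 2 * r p) - 1\<bar> \<le> \<bar>exp (\<theta> p) - 1\<bar> + 2 * r p * exp (\<theta> p)"
        unfolding eq using abs_triangle_ineq[of "exp (\<theta> p) - 1" "2 * r p * exp (\<theta> p)"] nn by linarith
      also have "\<dots> \<le> exp 6 * (8 * u p) + 2 * (2 * u p) * exp 6"
      proof (intro add_mono mult_mono)
        show "\<bar>exp (\<theta> p) - 1\<bar> \<le> exp 6 * (8 * u p)"
        proof -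
          have "\<bar>exp (\<theta> p) - 1\<bar> \<le> exp 6 * \<bar>\<theta> p\<bar>" using \<theta>b[of p] u1 by (intro expm1_bound) simp
          also have "\<dots> \<le> exp 6 * (8 * u p)" using \<theta>b[of p] by (intro mult_left_mono) auto
          finally show ?thesis .
        qed
      qed (use rb[of p] et up[of p] rp[of p] in auto)
      also have "\<dots> \<le> C * u p" unfolding C_def using up[of p] by (simp add: algebra_simps)
      finally show ?thesis .
    qed
    have bdu': "(20 * exp 6) * exp (- ln 2 * t) = C * u p" using bdu unfolding tt C_def .
    have exp3': "exp (- (2 * t * A)) * exp (- (t * A)) = exp (- (3 * t * A))" by (simp add: mult_exp_exp algebra_simps)
    have exp1': "exp (- (2 * t * A)) / exp (- (t * A)) = exp (- (t * A))" by (simp add: exp_diff[symmetric] algebra_simps)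
    have e2': "exp (- (2 * t * A)) = exp (- (t * A)) * exp (- (t * A))" by (simp add: mult_exp_exp algebra_simps)
    have exp3: "exp (- 3 * t * A) = exp (- 2 * t * A) * exp (- t * A)" by (simp add: mult_exp_exp algebra_simps)
    have exp1: "exp (- t * A) = exp (- 2 * t * A) / exp (- t * A)" by (simp add: exp_diff[symmetric] algebra_simps)
    show "let D = m k - m (k - 1); t = (2::real) ^ nat (j - k);
                       bd = (20 * exp 6) * exp (- ln 2 * t) in
             (\<exists>\<epsilon>. \<bar>\<epsilon>\<bar> \<le> bd \<and> a j = D * (2 * Fc) * t^2 * exp (- 2 * t * A) * (1 + \<epsilon>)) \<and>
             (\<exists>\<epsilon>. \<bar>\<epsilon>\<bar> \<le> bd \<and> b j = D * (4 * Fc) * t^2 * exp (- 3 * t * A) * (1 + \<epsilon>)) \<and>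
             (\<exists>\<epsilon>. \<bar>\<epsilon>\<bar> \<le> bd \<and> m j - m (j - 1) = D * Fc * t^2 * exp (- t * A) * (1 + \<epsilon>)) \<and>
             (\<exists>\<epsilon>. \<bar>\<epsilon>\<bar> \<le> bd \<and> n (j - 1) - n j = D * (2 * Fc) * t^2 * exp (- 2 * t * A) * (1 + \<epsilon>))"
      unfolding Let_def D_def[symmetric] tt bdu'

    proof (intro conjI)
      show "\<exists>\<epsilon>. \<bar>\<epsilon>\<bar> \<le> C * u p \<and> a j = D * (2 * Fc) * t^2 * exp (- 2 * t * A) * (1 + \<epsilon>)"
        by (rule exI[of _ "exp (\<theta> p) - 1"]) (use E1 aj \<alpha>t in simp)
      show "\<exists>\<epsilon>. \<bar>\<epsilon>\<bar> \<le> C * u p \<and> b j = D * (4 * Fc) * t^2 * exp (- 3 * t * A) * (1 + \<epsilon>)"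
        by (rule exI[of _ "exp (\<theta> p + \<eta> p) - 1"]) (use E2 in \<open>simp add: bj \<alpha>t rt exp3' exp_add\<close>)
      show "\<exists>\<epsilon>. \<bar>\<epsilon>\<bar> \<le> C * u p \<and> m j - m (j - 1) = D * Fc * t^2 * exp (- t * A) * (1 + \<epsilon>)"
      proof (intro exI conjI)
        show "\<bar>exp (\<theta> p - \<eta> p) - 1\<bar> \<le> C * u p" by (rule E3)
        have eraw: "exp (- 2 * t * A) = exp (- t * A) * exp (- t * A)" by (simp add: mult_exp_exp algebra_simps)
        have "m j - m (j - 1) = \<alpha> p / r p" by (rule mj)
        also have "\<dots> = (D * (2 * Fc) * t^2 * exp (- 2 * t * A) * exp (\<theta> p)) / (2 * exp (- t * A) * exp (\<eta> p))"
          unfolding \<alpha>t rt ..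
        also have "\<dots> = (D * (2 * Fc) * t^2 * (exp (- t * A) * exp (- t * A)) * exp (\<theta> p)) / (2 * exp (- t * A) * exp (\<eta> p))"
          unfolding eraw ..
        also have "\<dots> = D * Fc * t^2 * exp (- t * A) * (exp (\<theta> p) / exp (\<eta> p))"
          by (simp add: field_simps)
        also have "\<dots> = D * Fc * t^2 * exp (- t * A) * (1 + (exp (\<theta> p - \<eta> p) - 1))"
          by (simp add: exp_diff)
        finally show "m j - m (j - 1) = D * Fc * t^2 * exp (- t * A) * (1 + (exp (\<theta> p - \<eta> p) - 1))" .
      qed
      show "\<exists>\<epsilon>. \<bar>\<epsilon>\<bar> \<le> C * u p \<and> n (j - 1) - n j = D * (2 * Fc) * t^2 * exp (- 2 * t * A) * (1 + \<epsilon>)"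
        by (rule exI[of _ "exp (\<theta> p) * (1 + 2 * r p) - 1"]) (use E4 in \<open>simp add: nj \<alpha>t\<close>)
    qed
  qed
qed


theorem mainTheorem6:
  "\<exists>\<kappa>1 \<kappa>2 c C :: real. 0 < \<kappa>1 \<and> \<kappa>1 < \<kappa>2 \<and> c > 0 \<and> C > 0 \<and>
     (\<forall>a b m n k. positive_ABMN_solution a b m n \<and> battlefield_index m n k \<longrightarrow>
        (\<exists>A F. A \<in> {\<kappa>1..\<kappa>2} \<and> F \<in> {\<kappa>1..\<kappa>2} \<and>
          (\<forall>j\<ge>k. let D = m k - m (k - 1); t = (2::real) ^ nat (j - k);
                       bd = C * exp (- c * t) in
             (\<exists>\<epsilon>. \<bar>\<epsilon>\<bar> \<le> bd \<and> a j = D * (2 * F) * t^2 * exp (- 2 * t * A) * (1 + \<epsilon>)) \<and>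
             (\<exists>\<epsilon>. \<bar>\<epsilon>\<bar> \<le> bd \<and> b j = D * (4 * F) * t^2 * exp (- 3 * t * A) * (1 + \<epsilon>)) \<and>
             (\<exists>\<epsilon>. \<bar>\<epsilon>\<bar> \<le> bd \<and> m j - m (j - 1) = D * F * t^2 * exp (- t * A) * (1 + \<epsilon>)) \<and>
             (\<exists>\<epsilon>. \<bar>\<epsilon>\<bar> \<le> bd \<and> n (j - 1) - n j = D * (2 * F) * t^2 * exp (- 2 * t * A) * (1 + \<epsilon>)))))"
  proof -
  have k1: "0 < exp (-4) / (10::real)" by simp
  have k2: "exp (-4) / 10 < exp (25::real)"
  proof -
    have "exp (-4) < exp (25::real)" by simp
    moreover have "exp (-4) / 10 \<le> exp (-4::real)" by simp
    ultimately show ?thesis by linarith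
  qed
  show ?thesis
  proof (rule exI[of _ "exp (-4) / 10"], rule exI[of _ "exp 25"], rule exI[of _ "ln 2"],
         rule exI[of _ "20 * exp 6"], intro conjI allI impI)
    show "0 < exp (-4) / (10::real)" by (rule k1)
    show "exp (-4) / 10 < exp (25::real)" by (rule k2)
    show "0 < ln (2::real)" by simp
    show "0 < 20 * exp (6::real)" by simp
  next
    fix a b m n k
    assume "positive_ABMN_solution a b m n \<and> battlefield_index m n k"
    thus "\<exists>A F. A \<in> {exp (-4) / 10..exp 25} \<and> F \<in> {exp (-4) / 10..exp 25} \<and>
          (\<forall>j\<ge>k. let D = m k - m (k - 1); t = (2::real) ^ nat (j - k);
                       bd = (20 * exp 6) * exp (- ln 2 * t) in
             (\<exists>\<epsilon>. \<bar>\<epsilon>\<bar> \<le> bd \<and> a j = D * (2 * F) * t^2 * exp (- 2 * t * A) * (1 + \<epsilon>)) \<and>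
             (\<exists>\<epsilon>. \<bar>\<epsilon>\<bar> \<le> bd \<and> b j = D * (4 * F) * t^2 * exp (- 3 * t * A) * (1 + \<epsilon>)) \<and>
             (\<exists>\<epsilon>. \<bar>\<epsilon>\<bar> \<le> bd \<and> m j - m (j - 1) = D * F * t^2 * exp (- t * A) * (1 + \<epsilon>)) \<and>
             (\<exists>\<epsilon>. \<bar>\<epsilon>\<bar> \<le> bd \<and> n (j - 1) - n j = D * (2 * F) * t^2 * exp (- 2 * t * A) * (1 + \<epsilon>)))"
      using main_sol by blast
  qed
qed

end
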